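(* If $\iota$ is of odd type with patching element $\gamma$, then there exists a root $\delta\in\Lambda$ ($\delta^2=-2$) such that $\delta_{\mathbb K_\gamma}^2=-1$ and $\delta_{\mathbb E_\gamma}^2=-1$, where $\delta=\delta_{\mathbb K_\gamma}+\delta_{\mathbb E_\gamma}$ is the decomposition in $\mathbb K_\gamma^\vee\oplus\mathbb E_\gamma^\vee$.
   Context: $\Lambda=\mathbb U(2)\oplus\mathbb U\oplus\mathbb E_8(2)$ (Enriques lattice). $\iota$ is a fixed-point-free involution of $K_{\tau,\tau'}=\mathrm{Km}(E_\tau\times E_{\tau'})$ with $\mathbf K\subset H^2(K_{\tau,\tau'},\mathbb Z)_-$, $\mathbf K\cong\mathbb U(2)\oplus\mathbb U(2)$ the image of $H^1(E_\tau,\mathbb Z)\otimes H^1(E_{\tau'},\mathbb Z)$; $\alpha$ a marking with $\alpha(H^2_-)=\Lambda$; $\mathbb K_\gamma=\alpha(\mathbf K)$ and $\mathbb E_\gamma$ its orthogonal complement in $\Lambda$ ($\cong\mathbb E_8(2)$). Then $\Lambda=\mathbb Z(d_1+d_2)+\mathbb K_\gamma\oplus\mathbb E_\gamma$ with $d_1\in\mathbb K_\gamma^\vee\setminus\mathbb K_\gamma$, $d_2\in\mathbb E_\gamma^\vee\setminus\mathbb E_\gamma$; the class $\gamma=\bar d_1\in A_{\mathbb K_\gamma}=A_{\mathbf K}$ is the patching element of $\iota$, and $\iota$ is of odd type if $q_{\mathbf K}(\gamma)=1\in\mathbb Z/2$ (i.e. $d_1^2$ is odd), of even type if $q_{\mathbf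 K}(\gamma)=0$. *)

theory Defs
  imports Complex_Main
begin

text \<open>Vectors of the rational/real hull of the Enriques lattice: functions nat => real
  supported on indices 0..11.  Coordinates 0,1 span U(2), 2,3 span U, 4..11 span E8(2)
  (E8 taken negative definite, so that roots have square -2).\<close>

definition E8_edge :: "nat \<Rightarrow> nat \<Rightarrow> bool" where
  "E8_edge i j \<longleftrightarrow> {i, j} \<in> {{0,1},{1,2},{2,3},{3,4},{4,5},{5,6},{2,7}}"

definition gram_E8 :: "nat \<Rightarrow> nat \<Rightarrow> int" where
  "gram_E8 i j = (if i = j then -2 else if E8_edge i j then 1 else 0)"

definition gram_U :: "nat \<Rightarrow> nat \<Rightarrow> int" where
  "gram_U i j = (if i \<noteq> j then 1 else 0)"

definition gram_Lambda :: "nat \<Rightarrow> nat \<Rightarrow> int" where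
  "gram_Lambda i j =
     (if i < 2 \<and> j < 2 then 2 * gram_U i j
      else if 2 \<le> i \<and> i < 4 \<and> 2 \<le> j \<and> j < 4 then gram_U (i - 2) (j - 2)
      else if 4 \<le> i \<and> i < 12 \<and> 4 \<le> j \<and> j < 12 then 2 * gram_E8 (i - 4) (j - 4)
      else 0)"

definition gram_U2U2 :: "nat \<Rightarrow> nat \<Rightarrow> int" where
  "gram_U2U2 i j =
     (if i < 2 \<and> j < 2 then 2 * gram_U i j
      else if 2 \<le> i \<and> i < 4 \<and> 2 \<le> j \<and> j < 4 then 2 * gram_U (i - 2) (j - 2)
      else 0)"

definition gram_E8_2 :: "nat \<Rightarrow> nat \<Rightarrow> int" where
  "gram_E8_2 i j = 2 * gram_E8 i j"

definition bil :: "(nat \<Rightarrow> real) \<Rightarrow> (nat \<Rightarrow> real) \<Rightarrow> real" where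
  "bil x y = (\<Sum>i<12. \<Sum>j<12. x i * of_int (gram_Lambda i j) * y j)"

definition Lam :: "(nat \<Rightarrow> real) set" where
  "Lam = {x. (\<forall>i<12. x i \<in> \<int>) \<and> (\<forall>i\<ge>12. x i = 0)}"

definition zspan :: "(nat \<Rightarrow> nat \<Rightarrow> real) \<Rightarrow> nat \<Rightarrow> (nat \<Rightarrow> real) set" where
  "zspan v n = {x. \<exists>c :: nat \<Rightarrow> int. x = (\<lambda>t. \<Sum>i<n. of_int (c i) * v i t)}"

definition rspan :: "(nat \<Rightarrow> nat \<Rightarrow> real) \<Rightarrow> nat \<Rightarrow> (nat \<Rightarrow> real) set" where
  "rspan v n = {x. \<exists>c :: nat \<Rightarrow> real. x = (\<lambda>t. \<Sum>i<n. c i * v i t)}"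

definition dual_lat :: "(nat \<Rightarrow> nat \<Rightarrow> real) \<Rightarrow> nat \<Rightarrow> (nat \<Rightarrow> real) set" where
  "dual_lat v n = {x \<in> rspan v n. \<forall>y \<in> zspan v n. bil x y \<in> \<int>}"

definition basis_with_gram ::
  "(nat \<Rightarrow> real) set \<Rightarrow> (nat \<Rightarrow> nat \<Rightarrow> real) \<Rightarrow> nat \<Rightarrow> (nat \<Rightarrow> nat \<Rightarrow> int) \<Rightarrow> bool" where
  "basis_with_gram L v n G \<longleftrightarrow>
     (\<forall>i<n. v i \<in> Lam) \<and> L = zspan v n \<and>
     (\<forall>c :: nat \<Rightarrow> real. (\<lambda>t. \<Sum>i<n. c i * v i t) = (\<lambda>t. 0) \<longrightarrow> (\<forall>i<n. c i = 0)) \<and>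
     (\<forall>i<n. \<forall>j<n. bil (v i) (v j) = of_int (G i j))"

definition orth_compl :: "(nat \<Rightarrow> real) set \<Rightarrow> (nat \<Rightarrow> real) set" where
  "orth_compl K = {x \<in> Lam. \<forall>k \<in> K. bil x k = 0}"

end

theory Submission
  imports Defs
begin
definition QE :: "int \<Rightarrow> int \<Rightarrow> int \<Rightarrow> int \<Rightarrow> int \<Rightarrow> int \<Rightarrow> int \<Rightarrow> int \<Rightarrow> int" where
 "QE a0 a1 a2 a3 a4 a5 a6 a7 = -2*(a0*a0+a1*a1+a2*a2+a3*a3+a4*a4+a5*a5+a6*a6+a7*a7)
   + 2*(a0*a1+a1*a2+a2*a3+a3*a4+a4*a5+a5*a6+a2*a7)"
definition QL :: "int list \<Rightarrow> int" where
 "QL xs = QE (xs!0) (xs!1) (xs!2) (xs!3) (xs!4) (xs!5) (xs!6) (xs!7)"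
definition rootsE :: "int list list" where "rootsE = [[1,0,0,0,0,0,0,0], [0,1,0,0,0,0,0,0], [1,1,0,0,0,0,0,0], [0,0,1,0,0,0,0,0], [0,1,1,0,0,0,0,0], [1,1,1,0,0,0,0,0], [0,0,0,1,0,0,0,0], [0,0,1,1,0,0,0,0], [0,1,1,1,0,0,0,0], [1,1,1,1,0,0,0,0], [0,0,0,0,1,0,0,0], [1,2,3,2,1,0,0,2], [0,0,0,1,1,0,0,0], [0,0,1,1,1,0,0,0], [0,1,1,1,1,0,0,0], [1,1,1,1,1,0,0,0], [0,0,0,0,0,1,0,0], [1,2,3,2,2,1,0,2], [1,2,4,3,2,1,0,2], [2,3,4,3,2,1,0,2], [1,3,4,3,2,1,0,2], [1,2,3,3,2,1,0,2], [0,0,0,0,1,1,0,0], [1,2,3,2,1,1,0,2], [0,0,0,1,1,1,0,0], [0,0,1,1,1,1,0,0], [0,1,1,1,1,1,0,0], [1,1,1,1,1,1,0,0], [0,0,0,0,0,0,1,0], [1,2,3,2,2,2,1,2], [1,2,4,3,2,2,1,2], [2,3,4,3,2,2,1,2], [1,3,4,3,2,2,1,2], [1,2,3,3,2,2,1,2], [1,2,4,4,3,2,1,2], [2,3,4,4,3,2,1,2], [1,3,4,4,3,2,1,2], [2,4,5,4,3,2,1,2], [2,3,5,4,3,2,1,2], [1,3,5,4,3,2,1,2], [1,2,4,3,3,2,1,2], [2,3,4,3,3,2,1,2], [1,3,4,3,3,2,1,2], [1,2,3,3,3,2,1,2], [0,0,0,0,0,1,1,0], [1,2,3,2,2,1,1,2],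 [1,2,4,3,2,1,1,2], [2,3,4,3,2,1,1,2], [1,3,4,3,2,1,1,2], [1,2,3,3,2,1,1,2], [0,0,0,0,1,1,1,0], [1,2,3,2,1,1,1,2], [0,0,0,1,1,1,1,0], [0,0,1,1,1,1,1,0], [0,1,1,1,1,1,1,0], [1,1,1,1,1,1,1,0], [0,0,0,0,0,0,0,1], [0,0,1,0,0,0,0,1], [0,1,1,0,0,0,0,1], [1,1,1,0,0,0,0,1], [1,2,2,1,0,0,0,1], [0,1,2,1,0,0,0,1], [1,1,2,1,0,0,0,1], [0,0,1,1,0,0,0,1], [0,1,1,1,0,0,0,1], [1,1,1,1,0,0,0,1], [1,2,2,2,1,0,0,1], [0,1,2,2,1,0,0,1], [1,1,2,2,1,0,0,1], [1,2,3,2,1,0,0,1], [1,2,2,1,1,0,0,1], [0,1,2,1,1,0,0,1], [1,1,2,1,1,0,0,1], [0,0,1,1,1,0,0,1], [0,1,1,1,1,0,0,1], [1,1,1,1,1,0,0,1], [1,2,2,2,2,1,0,1], [0,1,2,2,2,1,0,1], [1,1,2,2,2,1,0,1], [1,2,3,2,2,1,0,1], [2,4,6,5,4,3,2,3], [1,2,3,3,2,1,0,1], [1,2,2,2,1,1,0,1], [0,1,2,2,1,1,0,1], [1,1,2,2,1,1,0,1], [1,2,3,2,1,1,0,1], [1,2,2,1,1,1,0,1], [0,1,2,1,1,1,0,1], [1,1,2,1,1,1,0,1], [0,0,1,1,1,1,0,1], [0,1,1,1,1,1,0,1], [1,1,1,1,1,1,0,1], [1,2,2,2,2,2,1,1],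 [0,1,2,2,2,2,1,1], [1,1,2,2,2,2,1,1], [1,2,3,2,2,2,1,1], [2,4,6,5,4,2,1,3], [1,2,3,3,2,2,1,1], [2,4,6,4,3,2,1,3], [2,4,5,4,3,2,1,3], [2,3,5,4,3,2,1,3], [1,3,5,4,3,2,1,3], [2,4,6,5,3,2,1,3], [1,2,3,3,3,2,1,1], [1,2,2,2,2,1,1,1], [0,1,2,2,2,1,1,1], [1,1,2,2,2,1,1,1], [1,2,3,2,2,1,1,1], [2,4,6,5,4,3,1,3], [1,2,3,3,2,1,1,1], [1,2,2,2,1,1,1,1], [0,1,2,2,1,1,1,1], [1,1,2,2,1,1,1,1], [1,2,3,2,1,1,1,1], [1,2,2,1,1,1,1,1], [0,1,2,1,1,1,1,1], [1,1,2,1,1,1,1,1], [0,0,1,1,1,1,1,1], [0,1,1,1,1,1,1,1], [1,1,1,1,1,1,1,1]]"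
lemma roots_ok: "list_all (\<lambda>r. QL r = -2) rootsE"
  by code_simp
lemma classes_ok: "filter (\<lambda>ps. QL ps mod 4 = 2) (List.n_lists 8 [0,1]) = map (map (\<lambda>x. x mod 2)) rootsE"
  by code_simp

lemma QE_shift: "QE (p0+2*m0) (p1+2*m1) (p2+2*m2) (p3+2*m3) (p4+2*m4) (p5+2*m5) (p6+2*m6) (p7+2*m7)
  = QE p0 p1 p2 p3 p4 p5 p6 p7 + 4 * ((-2*(p0*m0+p1*m1+p2*m2+p3*m3+p4*m4+p5*m5+p6*m6+p7*m7)
     + (p0*m1+p1*m0+p1*m2+p2*m1+p2*m3+p3*m2+p3*m4+p4*m3+p4*m5+p5*m4+p5*m6+p6*m5+p2*m7+p7*m2))
     + QE m0 m1 m2 m3 m4 m5 m6 m7)"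
  unfolding QE_def by (simp add: algebra_simps)

lemma mod2_01: "(a::int) mod 2 \<in> {0,1}"
  by auto

lemma E8_class:
  assumes "QE a0 a1 a2 a3 a4 a5 a6 a7 mod 4 = 2"
  shows "\<exists>r0 r1 r2 r3 r4 r5 r6 r7. QE r0 r1 r2 r3 r4 r5 r6 r7 = -2 \<and>
     even (r0 - a0) \<and> even (r1 - a1) \<and> even (r2 - a2) \<and> even (r3 - a3) \<and>
     even (r4 - a4) \<and> even (r5 - a5) \<and> even (r6 - a6) \<and> even (r7 - a7)"
proof -
  define ps where "ps = [a0 mod 2, a1 mod 2, a2 mod 2, a3 mod 2, a4 mod 2, a5 mod 2, a6 mod 2, a7 mod 2]"
  have eq: "QE a0 a1 a2 a3 a4 a5 a6 a7 = QE (a0 mod 2 + 2*(a0 div 2)) (a1 mod 2 + 2*(a1 div 2))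
     (a2 mod 2 + 2*(a2 div 2)) (a3 mod 2 + 2*(a3 div 2)) (a4 mod 2 + 2*(a4 div 2))
     (a5 mod 2 + 2*(a5 div 2)) (a6 mod 2 + 2*(a6 div 2)) (a7 mod 2 + 2*(a7 div 2))"
    by simp
  have "\<exists>W. QE a0 a1 a2 a3 a4 a5 a6 a7 = QE (a0 mod 2) (a1 mod 2) (a2 mod 2) (a3 mod 2)
      (a4 mod 2) (a5 mod 2) (a6 mod 2) (a7 mod 2) + 4 * W"
    unfolding eq QE_shift by blast
  then obtain W where W: "QE a0 a1 a2 a3 a4 a5 a6 a7 = QE (a0 mod 2) (a1 mod 2) (a2 mod 2) (a3 mod 2)
      (a4 mod 2) (a5 mod 2) (a6 mod 2) (a7 mod 2) + 4 * W" by blast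
  have "QL ps = QE (a0 mod 2) (a1 mod 2) (a2 mod 2) (a3 mod 2)
      (a4 mod 2) (a5 mod 2) (a6 mod 2) (a7 mod 2)" by (simp add: ps_def QL_def)
  moreover have m4: "\<And>x w. (x + 4*w) mod 4 = (x::int) mod 4" by simp
  ultimately have "QL ps mod 4 = 2" using assms W by metis
  moreover have "ps \<in> set (List.n_lists 8 [0,1])"
  proof -
    have "set ps \<subseteq> set [0,1]" unfolding ps_def using mod2_01 by (simp only: set_simps insert_subset empty_subsetI)
    moreover have "length ps = 8" by (simp add: ps_def)
    ultimately show ?thesis unfolding set_n_lists by blast
  qed
  ultimately have "ps \<in> set (filter (\<lambda>ps. QL ps mod 4 = 2) (List.n_lists 8 [0,1]))"
    unfolding set_filter by blast
  then have "ps \<in> set (map (map (\<lambda>x. x mod 2)) rootsE)"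
    unfolding classes_ok .
  then obtain r where r: "r \<in> set rootsE" "map (\<lambda>x. x mod 2) r = ps" 
    unfolding set_map by blast
  have Qr: "QL r = -2" using roots_ok r(1) unfolding list_all_iff by blast
  have len: "length r = 8" using arg_cong[OF r(2), of length] by (simp add: ps_def)
  have ev: "\<And>x y::int. x mod 2 = y mod 2 \<Longrightarrow> even (x - y)"
    by (simp add: mod_eq_dvd_iff)
  have h: "\<And>i. i < 8 \<Longrightarrow> r ! i mod 2 = ps ! i"
    using r(2) len nth_map by metis
  have "r!0 mod 2 = a0 mod 2" using h[of 0] by (simp add: ps_def)
  moreover have "r!1 mod 2 = a1 mod 2" using h[of 1] by (simp add: ps_def)
  moreover have "r!2 mod 2 = a2 mod 2" using h[of 2] by (simp add: ps_def)
  moreover have "r!3 mod 2 = a3 mod 2" using h[of 3] by (simp add: ps_def)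
  moreover have "r!4 mod 2 = a4 mod 2" using h[of 4] by (simp add: ps_def)
  moreover have "r!5 mod 2 = a5 mod 2" using h[of 5] by (simp add: ps_def)
  moreover have "r!6 mod 2 = a6 mod 2" using h[of 6] by (simp add: ps_def)
  moreover have "r!7 mod 2 = a7 mod 2" using h[of 7] by (simp add: ps_def)
  ultimately have "even (r!0 - a0)" "even (r!1 - a1)" "even (r!2 - a2)" "even (r!3 - a3)"
    "even (r!4 - a4)" "even (r!5 - a5)" "even (r!6 - a6)" "even (r!7 - a7)"
    using ev by blast+
  moreover have "QE (r!0) (r!1) (r!2) (r!3) (r!4) (r!5) (r!6) (r!7) = -2" using Qr unfolding QL_def .
  ultimately show ?thesis by blast
qed
lemma E8_edge_sym: "E8_edge i j = E8_edge j i"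
  unfolding E8_edge_def by (simp add: insert_commute)
lemma gram_E8_sym: "gram_E8 i j = gram_E8 j i"
  unfolding gram_E8_def using E8_edge_sym by auto
lemma gram_U_sym: "gram_U i j = gram_U j i"
  unfolding gram_U_def by auto
lemma gram_Lambda_sym: "gram_Lambda i j = gram_Lambda j i"
  unfolding gram_Lambda_def using gram_E8_sym gram_U_sym by auto

lemma bil_sym: "bil x y = bil y x"
  unfolding bil_def
  apply (subst sum.swap)
  apply (simp add: gram_Lambda_sym mult.commute mult.left_commute)
  done

lemma bil_add_left: "bil (\<lambda>t. x t + y t) z = bil x z + bil y z"
  by (simp add: bil_def algebra_simps sum.distrib)

lemma bil_lc_left: "bil (\<lambda>t. \<Sum>i\<in>A. c i * v i t) w = (\<Sum>i\<in>A. c i * bil (v i) w)"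
  unfolding bil_def
  by (simp add: sum_distrib_left sum_distrib_right mult.assoc sum.swap[of _ A])

lemma basis_in_zspan:
  assumes "i < n" shows "v i \<in> zspan v n"
proof -
  have "(\<lambda>t. \<Sum>k<n. of_int (if k = i then 1 else 0) * v k t) = v i"
  proof
    fix t
    have "(\<Sum>k<n. of_int (if k = i then 1 else 0) * v k t) = (\<Sum>k<n. if k = i then v k t else 0)"
      by (rule sum.cong) auto
    also have "\<dots> = v i t" using assms by simp
    finally show "(\<Sum>k<n. of_int (if k = i then 1 else 0) * v k t) = v i t" .
  qed
  then show ?thesis unfolding zspan_def
    by (intro CollectI exI[of _ "\<lambda>k. if k = i then 1 else 0"]) (rule sym)
qed

lemma zero_in_zspan: "(\<lambda>t. 0) \<in> zspan v n"
  unfolding zspan_def by (rule CollectI, rule exI[of _ "\<lambda>k. 0"]) simp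


lemma bwg_gram: "basis_with_gram L v n G \<Longrightarrow> i < n \<Longrightarrow> j < n \<Longrightarrow> bil (v i) (v j) = of_int (G i j)"
  unfolding basis_with_gram_def by blast

lemma bil_lc_basis:
  assumes "basis_with_gram L v n G" "j < n"
  shows "bil (\<lambda>t. \<Sum>i<n. c i * v i t) (v j) = (\<Sum>i<n. c i * of_int (G i j))"
  unfolding bil_lc_left using bwg_gram[OF assms(1) _ assms(2)] by (intro sum.cong) auto

lemma bil_lc_lc:
  assumes "basis_with_gram L v n G"
  shows "bil (\<lambda>t. \<Sum>i<n. c i * v i t) (\<lambda>t. \<Sum>j<n. d j * v j t)
     = (\<Sum>i<n. c i * (\<Sum>j<n. d j * of_int (G j i)))"
proof -
  have "bil (v i) (\<lambda>t. \<Sum>j<n. d j * v j t) = (\<Sum>j<n. d j * of_int (G j i))" if "i < n" for i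
    using bil_lc_basis[OF assms that, of d] bil_sym by metis
  then show ?thesis unfolding bil_lc_left by (intro sum.cong) auto
qed

lemma lc_dual:
  assumes "basis_with_gram L v n G" "\<forall>i j. even (G i j)"
  shows "(\<lambda>t. \<Sum>i<n. (of_int (B i) / 2) * v i t) \<in> dual_lat v n"
  unfolding dual_lat_def
proof (intro CollectI conjI ballI)
  show "(\<lambda>t. \<Sum>i<n. (of_int (B i) / 2) * v i t) \<in> rspan v n"
    unfolding rspan_def by (intro CollectI exI[of _ "\<lambda>i. of_int (B i) / 2"]) (rule refl)
  fix y assume "y \<in> zspan v n"
  then obtain e :: "nat \<Rightarrow> int" where y: "y = (\<lambda>t. \<Sum>i<n. of_int (e i) * v i t)"
    unfolding zspan_def by blast
  have "bil (\<lambda>t. \<Sum>i<n. (of_int (B i) / 2) * v i t) y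
     = (\<Sum>i<n. (of_int (B i) / 2) * (\<Sum>j<n. of_int (e j) * of_int (G j i)))"
    unfolding y by (rule bil_lc_lc[OF assms(1)])
  also have "\<dots> = (\<Sum>i<n. \<Sum>j<n. of_int (B i * (e j * (G j i div 2))))"
  proof -
    have tf: "(of_int (B i) / 2) * (of_int (e j) * of_int (G j i)) = (of_int (B i * (e j * (G j i div 2))) :: real)" for i j
    proof -
      have "G j i = 2 * (G j i div 2)" using assms(2) by simp
      then have "(of_int (G j i) :: real) = 2 * of_int (G j i div 2)" by (metis of_int_mult of_int_numeral)
      then show ?thesis by simp
    qed
    show ?thesis by (simp only: sum_distrib_left tf)
  qed
  also have "\<dots> = of_int (\<Sum>i<n. \<Sum>j<n. B i * (e j * (G j i div 2)))" by simp
  finally have eq: "bil (\<lambda>t. \<Sum>i<n. (of_int (B i) / 2) * v i t) y = of_int (\<Sum>i<n. \<Sum>j<n. B i * (e j * (G j i div 2)))" .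
  show "bil (\<lambda>t. \<Sum>i<n. (of_int (B i) / 2) * v i t) y \<in> \<int>" unfolding eq by (rule Ints_of_int)
qed


lemma lc_shift:
  assumes "\<forall>i<n. b i = a i + of_int (e i)"
  shows "(\<lambda>t. \<Sum>i<n. b i * v i t) = (\<lambda>t. (\<Sum>i<n. a i * v i t) + (\<Sum>i<n. of_int (e i) * v i t))"
proof
  fix t
  have "(\<Sum>i<n. b i * v i t) = (\<Sum>i<n. a i * v i t + of_int (e i) * v i t)"
  proof (rule sum.cong)
    fix i assume "i \<in> {..<n}"
    then have "b i = a i + of_int (e i)" using assms by simp
    then show "b i * v i t = a i * v i t + of_int (e i) * v i t" by (simp add: distrib_right)
  qed simp
  then show "(\<Sum>i<n. b i * v i t) = (\<Sum>i<n. a i * v i t) + (\<Sum>i<n. of_int (e i) * v i t)"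
    by (simp only: sum.distrib)
qed


lemma bwg_L: "basis_with_gram L v n G \<Longrightarrow> L = zspan v n"
  unfolding basis_with_gram_def by blast

lemma orth_KE:
  assumes "basis_with_gram K kb n G" "E = orth_compl K" "basis_with_gram E eb m H"
  shows "bil (\<lambda>t. \<Sum>i<n. c i * kb i t) (\<lambda>t. \<Sum>j<m. d j * eb j t) = 0"
proof -
  have o: "bil (eb j) (kb i) = 0" if "i < n" "j < m" for i j
  proof -
    have "kb i \<in> K" using bwg_L[OF assms(1)] basis_in_zspan[OF that(1)] by simp
    moreover have "eb j \<in> E" using bwg_L[OF assms(3)] basis_in_zspan[OF that(2)] by simp
    ultimately show ?thesis using assms(2) unfolding orth_compl_def by blast
  qed
  have "bil (kb i) (\<lambda>t. \<Sum>j<m. d j * eb j t) = 0" if "i < n" for i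
  proof -
    have "bil (kb i) (\<lambda>t. \<Sum>j<m. d j * eb j t) = (\<Sum>j<m. d j * bil (eb j) (kb i))"
      by (subst bil_sym, rule bil_lc_left)
    also have "\<dots> = 0" using o[OF that] by simp
    finally show ?thesis .
  qed
  then have "(\<Sum>i<n. c i * bil (kb i) (\<lambda>t. \<Sum>j<m. d j * eb j t)) = 0" by simp
  then show ?thesis by (simp only: bil_lc_left)
qed

lemma even_qf2:
  fixes z :: "nat \<Rightarrow> int" and G :: "nat \<Rightarrow> nat \<Rightarrow> int"
  assumes "\<forall>i j. G i j = G j i" "\<forall>i. even (G i i)" "finite A"
  shows "even (\<Sum>i\<in>A. \<Sum>j\<in>A. z i * G i j * z j)"
  using assms(3)
proof (induction A rule: finite_induct)
  case empty then show ?case by simp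
next
  case (insert x F)
  let ?f = "\<lambda>i j. z i * G i j * z j"
  have "(\<Sum>i\<in>insert x F. \<Sum>j\<in>insert x F. ?f i j)
      = ?f x x + (\<Sum>j\<in>F. ?f x j) + (\<Sum>i\<in>F. ?f i x) + (\<Sum>i\<in>F. \<Sum>j\<in>F. ?f i j)"
    using insert by (simp add: sum.distrib)
  also have "(\<Sum>i\<in>F. ?f i x) = (\<Sum>j\<in>F. ?f x j)"
    using assms(1) by (intro sum.cong) (auto simp: mult.commute)
  finally have eq: "(\<Sum>i\<in>insert x F. \<Sum>j\<in>insert x F. ?f i j)
      = ?f x x + 2 * (\<Sum>j\<in>F. ?f x j) + (\<Sum>i\<in>F. \<Sum>j\<in>F. ?f i j)" by simp
  have "even (?f x x)" using assms(2) by simp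
  then show ?case unfolding eq using insert.IH by simp
qed


lemma gram_Lambda_diag_even: "even (gram_Lambda i i)"
  unfolding gram_Lambda_def by (simp add: gram_U_def gram_E8_def)

lemma Lam_even:
  assumes "z \<in> Lam"
  shows "\<exists>w::int. bil z z = 2 * of_int w"
proof -
  define Z where "Z i = \<lfloor>z i\<rfloor>" for i
  have zi: "z i = of_int (Z i)" if "i < 12" for i
    using assms that unfolding Lam_def Z_def by auto
  have "bil z z = (\<Sum>i<12. \<Sum>j<12. of_int (Z i * gram_Lambda i j * Z j))"
    unfolding bil_def by (intro sum.cong refl) (simp add: zi)
  also have "\<dots> = of_int (\<Sum>i<12. \<Sum>j<12. Z i * gram_Lambda i j * Z j)" by simp
  finally have eq: "bil z z = of_int (\<Sum>i<12. \<Sum>j<12. Z i * gram_Lambda i j * Z j)" .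
  have "even (\<Sum>i<12. \<Sum>j<12. Z i * gram_Lambda i j * Z j)"
    by (rule even_qf2) (auto simp: gram_Lambda_sym gram_Lambda_diag_even)
  then obtain w where "(\<Sum>i<12. \<Sum>j<12. Z i * gram_Lambda i j * Z j) = 2 * w" by blast
  then show ?thesis unfolding eq by (intro exI[of _ w]) simp
qed


lemma half_qf:
  assumes "basis_with_gram L v n G"
  shows "bil (\<lambda>t. \<Sum>i<n. (of_int (A i) / 2) * v i t) (\<lambda>t. \<Sum>i<n. (of_int (A i) / 2) * v i t)
     = of_int (\<Sum>i<n. \<Sum>j<n. A i * (A j * G j i)) / 4"
proof -
  have "bil (\<lambda>t. \<Sum>i<n. (of_int (A i) / 2) * v i t) (\<lambda>t. \<Sum>i<n. (of_int (A i) / 2) * v i t)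
     = (\<Sum>i<n. (of_int (A i) / 2) * (\<Sum>j<n. (of_int (A j) / 2) * of_int (G j i)))"
    by (rule bil_lc_lc[OF assms])
  also have "\<dots> = (\<Sum>i<n. \<Sum>j<n. of_int (A i * (A j * G j i)) / 4)"
    by (simp add: sum_distrib_left)
  also have "\<dots> = of_int (\<Sum>i<n. \<Sum>j<n. A i * (A j * G j i)) / 4"
    by (simp add: sum_divide_distrib)
  finally show ?thesis .
qed

lemma four_cases: "(i::nat) < 4 \<Longrightarrow> i = 0 \<or> i = 1 \<or> i = 2 \<or> i = 3" by auto

lemma qf_U2U2: "(\<Sum>i<4. \<Sum>j<4. A i * (A j * gram_U2U2 j i)) = 4 * (A 0 * A 1 + A 2 * A 3)"
  by (simp add: eval_nat_numeral gram_U2U2_def gram_U_def algebra_simps)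

lemma E8_edge_iff: "E8_edge i j \<longleftrightarrow>
  (i=0\<and>j=1) \<or> (i=1\<and>j=0) \<or> (i=1\<and>j=2) \<or> (i=2\<and>j=1) \<or> (i=2\<and>j=3) \<or> (i=3\<and>j=2) \<or>
  (i=3\<and>j=4) \<or> (i=4\<and>j=3) \<or> (i=4\<and>j=5) \<or> (i=5\<and>j=4) \<or> (i=5\<and>j=6) \<or> (i=6\<and>j=5) \<or>
  (i=2\<and>j=7) \<or> (i=7\<and>j=2)"
  unfolding E8_edge_def by (auto simp: doubleton_eq_iff)

lemma qf_E8: "(\<Sum>i<8. \<Sum>j<8. A i * (A j * gram_E8_2 j i)) = 2 * QE (A 0) (A 1) (A 2) (A 3) (A 4) (A 5) (A 6) (A 7)"
  by (simp add: eval_nat_numeral gram_E8_2_def gram_E8_def E8_edge_iff QE_def algebra_simps)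


lemma K_int:
  fixes a0 a1 a2 a3 :: int
  assumes "odd (a0 * a1 + a2 * a3)"
  shows "\<exists>b0 b1 b2 b3. b0 * b1 + b2 * b3 = -1 \<and> even (b0 - a0) \<and> even (b1 - a1) \<and> even (b2 - a2) \<and> even (b3 - a3)"
proof (cases "odd (a0 * a1)")
  case True
  then have o: "odd a0" "odd a1" by auto
  have "even (a2 * a3)" using assms True by auto
  then have "even a2 \<or> even a3" by auto
  then show ?thesis
  proof
    assume "even a2"
    then show ?thesis using o
      by (intro exI[of _ 1] exI[of _ "-1"] exI[of _ 0] exI[of _ a3]) auto
  next
    assume "even a3"
    then show ?thesis using o
      by (intro exI[of _ 1] exI[of _ "-1"] exI[of _ a2] exI[of _ 0]) auto
  qed
next
  case False
  then have "odd (a2 * a3)" using assms by auto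
  then have o: "odd a2" "odd a3" by auto
  have "even a0 \<or> even a1" using False by auto
  then show ?thesis
  proof
    assume "even a0"
    then show ?thesis using o
      by (intro exI[of _ 0] exI[of _ a1] exI[of _ 1] exI[of _ "-1"]) auto
  next
    assume "even a1"
    then show ?thesis using o
      by (intro exI[of _ a0] exI[of _ 0] exI[of _ 1] exI[of _ "-1"]) auto
  qed
qed

lemma half_coeffs:
  fixes c :: "nat \<Rightarrow> real"
  assumes "\<forall>i<n. 2 * c i \<in> \<int>"
  shows "\<exists>A :: nat \<Rightarrow> int. \<forall>i<n. c i = of_int (A i) / 2"
proof -
  have "\<forall>i. \<exists>z::int. i < n \<longrightarrow> c i = of_int z / 2"
  proof
    fix i show "\<exists>z::int. i < n \<longrightarrow> c i = of_int z / 2"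
  proof (cases "i < n")
    case True
    then have "2 * c i \<in> \<int>" using assms by blast
    then obtain z where z: "2 * c i = of_int z" by (elim Ints_cases)
    have "c i = of_int z / 2" using z by linarith
    then show ?thesis by blast
  qed simp
  qed
  from choice[OF this] show ?thesis by blast
qed

lemma K_part:
  assumes KB: "basis_with_gram KK kb 4 gram_U2U2"
    and d1: "d1 \<in> dual_lat kb 4"
    and n: "bil d1 d1 = of_int n" "odd n"
  shows "\<exists>x \<in> dual_lat kb 4. \<exists>k \<in> KK. x = (\<lambda>t. d1 t + k t) \<and> bil x x = -1"
proof -
  obtain c where dc: "d1 = (\<lambda>t. \<Sum>i<4. c i * kb i t)"
    using d1 unfolding dual_lat_def rspan_def by blast
  have dz: "bil d1 y \<in> \<int>" if "y \<in> zspan kb 4" for y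
    using d1 that unfolding dual_lat_def by blast
  have b: "bil d1 (kb j) = (\<Sum>i<4. c i * of_int (gram_U2U2 i j))" if "j < 4" for j
    unfolding dc by (rule bil_lc_basis[OF KB that])
  have "bil d1 (kb 0) = 2 * c 1" "bil d1 (kb 1) = 2 * c 0" "bil d1 (kb 2) = 2 * c 3" "bil d1 (kb 3) = 2 * c 2"
    by (simp_all add: b eval_nat_numeral gram_U2U2_def gram_U_def)
  moreover have "bil d1 (kb j) \<in> \<int>" if "j < 4" for j
    using dz basis_in_zspan[OF that] by blast
  ultimately have "2 * c 0 \<in> \<int>" "2 * c 1 \<in> \<int>" "2 * c 2 \<in> \<int>" "2 * c 3 \<in> \<int>"
    by (metis zero_less_numeral one_less_numeral_iff semiring_norm(76) numeral_less_iff semiring_norm(77) semiring_norm(78) semiring_norm(79) semiring_norm(80) semiring_norm(81))+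
  then have "\<forall>i<4. 2 * c i \<in> \<int>" using four_cases by blast
  then obtain A where A: "\<forall>i<4. c i = of_int (A i) / 2" using half_coeffs by blast
  have dA: "d1 = (\<lambda>t. \<Sum>i<4. (of_int (A i) / 2) * kb i t)"
    unfolding dc using A by (intro ext sum.cong) auto
  have "bil d1 d1 = of_int (4 * (A 0 * A 1 + A 2 * A 3)) / 4"
    unfolding dA half_qf[OF KB] qf_U2U2 ..
  then have "(of_int n :: real) = of_int (A 0 * A 1 + A 2 * A 3)" using n(1) by simp
  then have "n = A 0 * A 1 + A 2 * A 3" by (rule of_int_eq_iff[THEN iffD1])
  then obtain b0 b1 b2 b3 where bb: "b0 * b1 + b2 * b3 = -1" "even (b0 - A 0)" "even (b1 - A 1)"
    "even (b2 - A 2)" "even (b3 - A 3)"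
    using K_int n(2) by blast
  define B where "B = (\<lambda>i::nat. if i = 0 then b0 else if i = 1 then b1 else if i = 2 then b2 else b3)"
  have B0: "B 0 = b0" "B 1 = b1" "B 2 = b2" "B 3 = b3" by (simp_all add: B_def)
  have evB: "\<forall>i<4. even (B i - A i)" using four_cases bb B0 by auto
  define x where "x = (\<lambda>t. \<Sum>i<4. (of_int (B i) / 2) * kb i t)"
  define k where "k = (\<lambda>t. \<Sum>i<4. of_int ((B i - A i) div 2) * kb i t)"
  have "x \<in> dual_lat kb 4" unfolding x_def
    by (rule lc_dual[OF KB]) (simp add: gram_U2U2_def gram_U_def)
  moreover have "k \<in> KK" unfolding k_def bwg_L[OF KB] zspan_def
    by (intro CollectI exI[of _ "\<lambda>i. (B i - A i) div 2"]) (rule refl)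
  moreover have "x = (\<lambda>t. d1 t + k t)"
  proof -
    have "\<forall>i<4. of_int (B i) / 2 = of_int (A i) / 2 + (of_int ((B i - A i) div 2) :: real)"
    proof (intro allI impI)
      fix i :: nat assume "i < 4"
      then have "(2::int) dvd (B i - A i)" using evB by blast
      then have "(of_int ((B i - A i) div 2) :: real) = of_int (B i - A i) / 2"
        by (simp add: of_int_div)
      then show "of_int (B i) / 2 = of_int (A i) / 2 + (of_int ((B i - A i) div 2) :: real)"
        by simp
    qed
    then show ?thesis unfolding x_def k_def dA by (rule lc_shift)
  qed
  moreover have "bil x x = -1"
  proof -
    have "bil x x = of_int (4 * (B 0 * B 1 + B 2 * B 3)) / 4"
      unfolding x_def half_qf[OF KB] qf_U2U2 ..
    moreover have "B 0 * B 1 + B 2 * B 3 = -1" using bb(1) B0 by simp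
    ultimately show ?thesis by (simp only:)
  qed
  ultimately show ?thesis by blast
qed


lemma eight_cases: "(i::nat) < 8 \<Longrightarrow> i = 0 \<or> i = 1 \<or> i = 2 \<or> i = 3 \<or> i = 4 \<or> i = 5 \<or> i = 6 \<or> i = 7" by auto

lemma E_part:
  assumes EB: "basis_with_gram EE eb 8 gram_E8_2"
    and d2: "d2 \<in> dual_lat eb 8"
    and m: "bil d2 d2 = of_int m" "odd m"
  shows "\<exists>y \<in> dual_lat eb 8. \<exists>e \<in> EE. y = (\<lambda>t. d2 t + e t) \<and> bil y y = -1"
proof -
  obtain c where dc: "d2 = (\<lambda>t. \<Sum>i<8. c i * eb i t)"
    using d2 unfolding dual_lat_def rspan_def by blast
  have dz: "bil d2 y \<in> \<int>" if "y \<in> zspan eb 8" for y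
    using d2 that unfolding dual_lat_def by blast
  have b: "bil d2 (eb j) = (\<Sum>i<8. c i * of_int (gram_E8_2 i j))" if "j < 8" for j
    unfolding dc by (rule bil_lc_basis[OF EB that])
  have u: "bil d2 (eb 0) = 2 * (-2 * c 0 + c 1)" "bil d2 (eb 1) = 2 * (-2 * c 1 + c 0 + c 2)" "bil d2 (eb 2) = 2 * (-2 * c 2 + c 1 + c 3 + c 7)" "bil d2 (eb 3) = 2 * (-2 * c 3 + c 2 + c 4)" "bil d2 (eb 4) = 2 * (-2 * c 4 + c 3 + c 5)" "bil d2 (eb 5) = 2 * (-2 * c 5 + c 4 + c 6)" "bil d2 (eb 6) = 2 * (-2 * c 6 + c 5)" "bil d2 (eb 7) = 2 * (-2 * c 7 + c 2)"
    by (simp_all add: b eval_nat_numeral gram_E8_2_def gram_E8_def E8_edge_iff)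
  have uZ: "bil d2 (eb j) \<in> \<int>" if "j < 8" for j
    using dz basis_in_zspan[OF that] by blast
  have c0: "2 * c 0 = - (4 * bil d2 (eb 0) + 7 * bil d2 (eb 1) + 10 * bil d2 (eb 2) + 8 * bil d2 (eb 3) + 6 * bil d2 (eb 4) + 4 * bil d2 (eb 5) + 2 * bil d2 (eb 6) + 5 * bil d2 (eb 7))" unfolding u by (simp add: algebra_simps)
  have i0: "2 * c 0 \<in> \<int>" unfolding c0 by (intro Ints_minus Ints_add Ints_mult Ints_numeral uZ) simp_all
  have c1: "2 * c 1 = - (7 * bil d2 (eb 0) + 14 * bil d2 (eb 1) + 20 * bil d2 (eb 2) + 16 * bil d2 (eb 3) + 12 * bil d2 (eb 4) + 8 * bil d2 (eb 5) + 4 * bil d2 (eb 6) + 10 * bil d2 (eb 7))" unfolding u by (simp add: algebra_simps)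
  have i1: "2 * c 1 \<in> \<int>" unfolding c1 by (intro Ints_minus Ints_add Ints_mult Ints_numeral uZ) simp_all
  have c2: "2 * c 2 = - (10 * bil d2 (eb 0) + 20 * bil d2 (eb 1) + 30 * bil d2 (eb 2) + 24 * bil d2 (eb 3) + 18 * bil d2 (eb 4) + 12 * bil d2 (eb 5) + 6 * bil d2 (eb 6) + 15 * bil d2 (eb 7))" unfolding u by (simp add: algebra_simps)
  have i2: "2 * c 2 \<in> \<int>" unfolding c2 by (intro Ints_minus Ints_add Ints_mult Ints_numeral uZ) simp_all
  have c3: "2 * c 3 = - (8 * bil d2 (eb 0) + 16 * bil d2 (eb 1) + 24 * bil d2 (eb 2) + 20 * bil d2 (eb 3) + 15 * bil d2 (eb 4) + 10 * bil d2 (eb 5) + 5 * bil d2 (eb 6) + 12 * bil d2 (eb 7))" unfolding u by (simp add: algebra_simps)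
  have i3: "2 * c 3 \<in> \<int>" unfolding c3 by (intro Ints_minus Ints_add Ints_mult Ints_numeral uZ) simp_all
  have c4: "2 * c 4 = - (6 * bil d2 (eb 0) + 12 * bil d2 (eb 1) + 18 * bil d2 (eb 2) + 15 * bil d2 (eb 3) + 12 * bil d2 (eb 4) + 8 * bil d2 (eb 5) + 4 * bil d2 (eb 6) + 9 * bil d2 (eb 7))" unfolding u by (simp add: algebra_simps)
  have i4: "2 * c 4 \<in> \<int>" unfolding c4 by (intro Ints_minus Ints_add Ints_mult Ints_numeral uZ) simp_all
  have c5: "2 * c 5 = - (4 * bil d2 (eb 0) + 8 * bil d2 (eb 1) + 12 * bil d2 (eb 2) + 10 * bil d2 (eb 3) + 8 * bil d2 (eb 4) + 6 * bil d2 (eb 5) + 3 * bil d2 (eb 6) + 6 * bil d2 (eb 7))" unfolding u by (simp add: algebra_simps)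
  have i5: "2 * c 5 \<in> \<int>" unfolding c5 by (intro Ints_minus Ints_add Ints_mult Ints_numeral uZ) simp_all
  have c6: "2 * c 6 = - (2 * bil d2 (eb 0) + 4 * bil d2 (eb 1) + 6 * bil d2 (eb 2) + 5 * bil d2 (eb 3) + 4 * bil d2 (eb 4) + 3 * bil d2 (eb 5) + 2 * bil d2 (eb 6) + 3 * bil d2 (eb 7))" unfolding u by (simp add: algebra_simps)
  have i6: "2 * c 6 \<in> \<int>" unfolding c6 by (intro Ints_minus Ints_add Ints_mult Ints_numeral uZ) simp_all
  have c7: "2 * c 7 = - (5 * bil d2 (eb 0) + 10 * bil d2 (eb 1) + 15 * bil d2 (eb 2) + 12 * bil d2 (eb 3) + 9 * bil d2 (eb 4) + 6 * bil d2 (eb 5) + 3 * bil d2 (eb 6) + 8 * bil d2 (eb 7))" unfolding u by (simp add: algebra_simps)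
  have i7: "2 * c 7 \<in> \<int>" unfolding c7 by (intro Ints_minus Ints_add Ints_mult Ints_numeral uZ) simp_all

  have "\<forall>i<8. 2 * c i \<in> \<int>" using eight_cases i0 i1 i2 i3 i4 i5 i6 i7 by blast
  then obtain A where A: "\<forall>i<8. c i = of_int (A i) / 2" using half_coeffs by blast
  have dA: "d2 = (\<lambda>t. \<Sum>i<8. (of_int (A i) / 2) * eb i t)"
    unfolding dc using A by (intro ext sum.cong) auto
  have "bil d2 d2 = of_int (2 * QE (A 0) (A 1) (A 2) (A 3) (A 4) (A 5) (A 6) (A 7)) / 4"
    unfolding dA half_qf[OF EB] qf_E8 ..
  then have "(of_int (2 * m) :: real) = of_int (QE (A 0) (A 1) (A 2) (A 3) (A 4) (A 5) (A 6) (A 7))"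
    using m(1) by simp
  then have Qm: "QE (A 0) (A 1) (A 2) (A 3) (A 4) (A 5) (A 6) (A 7) = 2 * m"
    by (rule of_int_eq_iff[THEN iffD1, symmetric])
  have "(2 * m) mod 4 = 2" using m(2) by (elim oddE) simp
  then have "QE (A 0) (A 1) (A 2) (A 3) (A 4) (A 5) (A 6) (A 7) mod 4 = 2" unfolding Qm .
  from E8_class[OF this] obtain r0 r1 r2 r3 r4 r5 r6 r7 where
    rr: "QE r0 r1 r2 r3 r4 r5 r6 r7 = -2" "even (r0 - A 0)" "even (r1 - A 1)" "even (r2 - A 2)"
      "even (r3 - A 3)" "even (r4 - A 4)" "even (r5 - A 5)" "even (r6 - A 6)" "even (r7 - A 7)"
    by blast
  define B where "B = (\<lambda>i::nat. if i = 0 then r0 else if i = 1 then r1 else if i = 2 then r2 else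
     if i = 3 then r3 else if i = 4 then r4 else if i = 5 then r5 else if i = 6 then r6 else r7)"
  have B0: "B 0 = r0" "B 1 = r1" "B 2 = r2" "B 3 = r3" "B 4 = r4" "B 5 = r5" "B 6 = r6" "B 7 = r7"
    by (simp_all add: B_def)
  have evB: "\<forall>i<8. even (B i - A i)" using eight_cases rr B0 by auto
  define y where "y = (\<lambda>t. \<Sum>i<8. (of_int (B i) / 2) * eb i t)"
  define e where "e = (\<lambda>t. \<Sum>i<8. of_int ((B i - A i) div 2) * eb i t)"
  have "y \<in> dual_lat eb 8" unfolding y_def
    by (rule lc_dual[OF EB]) (simp add: gram_E8_2_def)
  moreover have "e \<in> EE" unfolding e_def bwg_L[OF EB] zspan_def
    by (intro CollectI exI[of _ "\<lambda>i. (B i - A i) div 2"]) (rule refl)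
  moreover have "y = (\<lambda>t. d2 t + e t)"
  proof -
    have "\<forall>i<8. of_int (B i) / 2 = of_int (A i) / 2 + (of_int ((B i - A i) div 2) :: real)"
    proof (intro allI impI)
      fix i :: nat assume "i < 8"
      then have "(2::int) dvd (B i - A i)" using evB by blast
      then have "(of_int ((B i - A i) div 2) :: real) = of_int (B i - A i) / 2"
        by (simp add: of_int_div)
      then show "of_int (B i) / 2 = of_int (A i) / 2 + (of_int ((B i - A i) div 2) :: real)"
        by simp
    qed
    then show ?thesis unfolding y_def e_def dA by (rule lc_shift)
  qed
  moreover have "bil y y = -1"
  proof -
    have "bil y y = of_int (2 * QE (B 0) (B 1) (B 2) (B 3) (B 4) (B 5) (B 6) (B 7)) / 4"
      unfolding y_def half_qf[OF EB] qf_E8 ..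
    moreover have "QE (B 0) (B 1) (B 2) (B 3) (B 4) (B 5) (B 6) (B 7) = -2" using rr(1) B0 by simp
    ultimately show ?thesis by (simp only:)
  qed
  ultimately show ?thesis by blast
qed


lemma bil_sum_orth:
  assumes "bil x y = 0"
  shows "bil (\<lambda>t. x t + y t) (\<lambda>t. x t + y t) = bil x x + bil y y"
proof -
  have "bil (\<lambda>t. x t + y t) (\<lambda>t. x t + y t) = bil x (\<lambda>t. x t + y t) + bil y (\<lambda>t. x t + y t)"
    by (rule bil_add_left)
  also have "bil x (\<lambda>t. x t + y t) = bil x x + bil y x"
    by (subst bil_sym, rule bil_add_left)
  also have "bil y (\<lambda>t. x t + y t) = bil x y + bil y y"
    by (subst bil_sym, rule bil_add_left)
  finally show ?thesis using assms bil_sym[of y x] by simp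
qed

lemma orth_rspan:
  assumes "basis_with_gram K kb n G" "E = orth_compl K" "basis_with_gram E eb m H"
    "x \<in> rspan kb n" "y \<in> rspan eb m"
  shows "bil x y = 0"
proof -
  obtain c where "x = (\<lambda>t. \<Sum>i<n. c i * kb i t)" using assms(4) unfolding rspan_def by blast
  moreover obtain d where "y = (\<lambda>t. \<Sum>j<m. d j * eb j t)" using assms(5) unfolding rspan_def by blast
  ultimately show ?thesis using orth_KE[OF assms(1-3)] by simp
qed

theorem lemma3p12:
  fixes KK EE :: "(nat \<Rightarrow> real) set"
    and kb eb :: "nat \<Rightarrow> nat \<Rightarrow> real"
    and d1 d2 :: "nat \<Rightarrow> real"
  assumes K_basis: "basis_with_gram KK kb 4 gram_U2U2"
    and E_def: "EE = orth_compl KK"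
    and E_basis: "basis_with_gram EE eb 8 gram_E8_2"
    and d1: "d1 \<in> dual_lat kb 4 - KK"
    and d2: "d2 \<in> dual_lat eb 8 - EE"
    and glue: "Lam = {(\<lambda>t. of_int m * (d1 t + d2 t) + k t + e t) | m k e.
                        (m :: int) \<in> UNIV \<and> k \<in> KK \<and> e \<in> EE}"
    and odd_type: "\<exists>n :: int. bil d1 d1 = of_int n \<and> odd n"
  shows "\<exists>\<delta> \<in> Lam. bil \<delta> \<delta> = -2 \<and>
           (\<exists>x \<in> dual_lat kb 4. \<exists>y \<in> dual_lat eb 8.
              \<delta> = (\<lambda>t. x t + y t) \<and> bil x x = -1 \<and> bil y y = -1)"
proof -
  have d1D: "d1 \<in> dual_lat kb 4" and d2D: "d2 \<in> dual_lat eb 8" using d1 d2 by auto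
  have orth: "bil u w = 0" if "u \<in> dual_lat kb 4" "w \<in> dual_lat eb 8" for u w
    using orth_rspan[OF K_basis E_def E_basis] that unfolding dual_lat_def by blast
  obtain n :: int where n: "bil d1 d1 = of_int n" "odd n" using odd_type by blast
  have "(\<lambda>t. d1 t + d2 t) \<in> Lam"
    unfolding glue
    using zero_in_zspan[of kb 4] zero_in_zspan[of eb 8] bwg_L[OF K_basis] bwg_L[OF E_basis]
    by (intro CollectI exI[of _ "1::int"] exI[of _ "\<lambda>t. 0"]) auto
  from Lam_even[OF this] obtain w :: int where
    w: "bil (\<lambda>t. d1 t + d2 t) (\<lambda>t. d1 t + d2 t) = 2 * of_int w" by blast
  have "bil (\<lambda>t. d1 t + d2 t) (\<lambda>t. d1 t + d2 t) = bil d1 d1 + bil d2 d2"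
    by (rule bil_sum_orth[OF orth[OF d1D d2D]])
  then have m: "bil d2 d2 = of_int (2 * w - n)" using w n(1) by simp
  have "odd (2 * w - n)" using n(2) by simp
  from E_part[OF E_basis d2D m this] obtain y e where
    y: "y \<in> dual_lat eb 8" "e \<in> EE" "y = (\<lambda>t. d2 t + e t)" "bil y y = -1" by blast
  from K_part[OF K_basis d1D n] obtain x k where
    x: "x \<in> dual_lat kb 4" "k \<in> KK" "x = (\<lambda>t. d1 t + k t)" "bil x x = -1" by blast
  have "(\<lambda>t. x t + y t) \<in> Lam"
    unfolding glue using x(2,3) y(2,3)
    by (intro CollectI exI[of _ "1::int"] exI[of _ k] exI[of _ e]) (auto simp: algebra_simps)
  moreover have "bil (\<lambda>t. x t + y t) (\<lambda>t. x t + y t) = -2"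
    using bil_sum_orth[OF orth[OF x(1) y(1)]] x(4) y(4) by simp
  ultimately show ?thesis using x(1,4) y(1,4) by blast
qed

end
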